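(* Let $N\ge2$, $1\le q<2$, $\lambda_+,\lambda_->0$, $\mu>0$, and let $v\in H^1(B_1(x_0))$ be a weak solution of $-\Delta v=\mu\big(\lambda_+(v^+)^{q-1}-\lambda_-(v^-)^{q-1}\big)$ in $B_1(x_0)$. Suppose there exist $1\le\sigma<2/(2-q)$ and $\bar C>0$ such that $H(v,x_0,r)\le\bar C r^{N-1+2\sigma}$ for every $r\in(0,1)$. Then there exists $C=C(N,q,\lambda_+,\lambda_-)>0$ such that for every $\gamma\in[\sigma,\frac{2+\sigma q}{2})$ and every $r\in(0,1)$, $$\int_0^r\Phi_\gamma(v,x_0,s)\,ds\le\frac{C\mu\bar C^{q/2}}{2+\sigma q-2\gamma}\,r^{2+\sigma q-2\gamma};$$ in particular $\Phi_\gamma(v,x_0,\cdot)\in L^1(0,1)$.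
   Context: $v^\pm=\max\{\pm v,0\}$; for $q=1$, $(v^\pm)^0$ means $\chi_{\{\pm v>0\}}$. $F(v)=\mu\lambda_+(v^+)^q+\mu\lambda_-(v^-)^q$, $H(v,x_0,r)=\int_{S_r(x_0)}v^2\,d\sigma$, and $\Phi_\gamma(v,x_0,r)=\frac{2N-(N-2)q}{q\,r^{N-1+2\gamma}}\int_{B_r(x_0)}F(v)\,dx$. *)

theory Defs
  imports "HOL-Analysis.Analysis"
begin

text \<open>The powers (v^+)^(q-1) etc. are written with powr;
  note 0 powr a = 0 and t powr 0 = 1 for t > 0, so for q = 1 the term (v^+) powr 0 is
  exactly the characteristic function of {v > 0}, as in the paper's convention.\<close>

definition pos_part :: "real \<Rightarrow> real" where "pos_part t = max t 0"
definition neg_part :: "real \<Rightarrow> real" where "neg_part t = max (- t) 0"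

definition rhs :: "real \<Rightarrow> real \<Rightarrow> real \<Rightarrow> real \<Rightarrow> real \<Rightarrow> real" where
  "rhs \<mu> lp lm q t = \<mu> * (lp * pos_part t powr (q - 1) - lm * neg_part t powr (q - 1))"

definition Fpot :: "real \<Rightarrow> real \<Rightarrow> real \<Rightarrow> real \<Rightarrow> real \<Rightarrow> real" where
  "Fpot \<mu> lp lm q t = \<mu> * lp * pos_part t powr q + \<mu> * lm * neg_part t powr q"

definition test_fun :: "'a::euclidean_space set \<Rightarrow> ('a \<Rightarrow> real) \<Rightarrow> ('a \<Rightarrow> 'a) \<Rightarrow> bool" where
  "test_fun U \<phi> d\<phi> \<longleftrightarrow>
     (\<forall>x. (\<phi> has_derivative (\<lambda>h. d\<phi> x \<bullet> h)) (at x)) \<and> continuous_on UNIV d\<phi> \<and>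
     compact (closure {x. \<phi> x \<noteq> 0}) \<and> closure {x. \<phi> x \<noteq> 0} \<subseteq> U"

definition weak_gradient :: "'a::euclidean_space set \<Rightarrow> ('a \<Rightarrow> real) \<Rightarrow> ('a \<Rightarrow> 'a) \<Rightarrow> bool" where
  "weak_gradient U v g \<longleftrightarrow>
     (\<forall>\<phi> d\<phi>. test_fun U \<phi> d\<phi> \<longrightarrow>
        (\<forall>i\<in>Basis. (LINT x:U|lborel. v x * (d\<phi> x \<bullet> i)) = - (LINT x:U|lborel. (g x \<bullet> i) * \<phi> x)))"

definition H1_with_grad :: "'a::euclidean_space set \<Rightarrow> ('a \<Rightarrow> real) \<Rightarrow> ('a \<Rightarrow> 'a) \<Rightarrow> bool" where
  "H1_with_grad U v g \<longleftrightarrow>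
     set_borel_measurable lborel U v \<and> set_integrable lborel U (\<lambda>x. (v x)\<^sup>2) \<and>
     set_borel_measurable lborel U g \<and> set_integrable lborel U (\<lambda>x. (norm (g x))\<^sup>2) \<and>
     weak_gradient U v g"

definition weak_solution :: "'a::euclidean_space set \<Rightarrow> (real \<Rightarrow> real) \<Rightarrow> ('a \<Rightarrow> real) \<Rightarrow> bool" where
  "weak_solution U f v \<longleftrightarrow>
     (\<exists>g. H1_with_grad U v g \<and>
        (\<forall>\<phi> d\<phi>. test_fun U \<phi> d\<phi> \<longrightarrow>
           (LINT x:U|lborel. g x \<bullet> d\<phi> x) = (LINT x:U|lborel. f (v x) * \<phi> x)))"

text \<open>Surface integral over the sphere S_r(x0), via the cone-measure formula for the
  surface measure: \<integral>_{S_r(x0)} w d\<sigma> = N r^(N-1) \<integral>_{B_1(0)} w(x0 + r y/|y|) dy.\<close>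
definition sphere_integral :: "('a::euclidean_space \<Rightarrow> real) \<Rightarrow> 'a \<Rightarrow> real \<Rightarrow> real" where
  "sphere_integral w x0 r =
     real DIM('a) * r ^ (DIM('a) - 1) *
       (LINT y:ball 0 1|lborel. w (x0 + (r / norm y) *\<^sub>R y))"

definition Hfun :: "('a::euclidean_space \<Rightarrow> real) \<Rightarrow> 'a \<Rightarrow> real \<Rightarrow> real" where
  "Hfun v x0 r = sphere_integral (\<lambda>x. (v x)\<^sup>2) x0 r"

definition Phi :: "real \<Rightarrow> real \<Rightarrow> real \<Rightarrow> real \<Rightarrow> real \<Rightarrow> ('a::euclidean_space \<Rightarrow> real) \<Rightarrow> 'a \<Rightarrow> real \<Rightarrow> real" where
  "Phi \<mu> lp lm q \<gamma> v x0 r =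
     (2 * real DIM('a) - (real DIM('a) - 2) * q) / (q * r powr (real DIM('a) - 1 + 2 * \<gamma>)) *
       (LINT x:ball x0 r|lborel. Fpot \<mu> lp lm q (v x))"

end

theory Submission
  imports Defs "HOL-Analysis.Analysis"
begin


lemma nn_integral_scale_euclidean:
  fixes f :: "'a::euclidean_space \<Rightarrow> ennreal" and c :: real
  assumes [measurable]: "f \<in> borel_measurable borel" and c: "c \<noteq> 0"
  shows "(\<integral>\<^sup>+x. f x \<partial>lborel) = ennreal (\<bar>c\<bar>^DIM('a)) * (\<integral>\<^sup>+x. f (c *\<^sub>R x) \<partial>lborel)"
  by (subst lborel_affine[OF c, of 0])
     (simp add: nn_integral_density nn_integral_distr nn_integral_cmult)

lemma inner_tail:
  fixes a :: real and n :: nat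
  assumes a: "a > 0" and n: "n \<ge> 1"
  shows "(\<integral>\<^sup>+l. ennreal (real n / l ^ (n+1)) * indicator {a<..} l \<partial>lborel) = ennreal (1 / a ^ n)"
proof -
  have "(\<integral>\<^sup>+l. ennreal (real n / l ^ (n+1)) * indicator {a<..} l \<partial>lborel)
      = (\<integral>\<^sup>+l. ennreal (indicator {a..} l * (real n * (1 / l ^ (n+1)))) \<partial>lborel)"
    using AE_lborel_singleton[of a]
    by (intro nn_integral_cong_AE) (auto elim!: eventually_mono split: split_indicator)
  also have "\<dots> = ennreal (real n * (1 / (real (n + 1 - 1) * a ^ (n + 1 - 1))))"
    using a n by (intro nn_integral_has_integral_lebesgue has_integral_mult_right has_integral_inverse_power_to_inf) auto
  also have "\<dots> = ennreal (1 / a ^ n)" using n by simp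
  finally show ?thesis .
qed


lemma polar:
  fixes f :: "'a::euclidean_space \<Rightarrow> ennreal"
  assumes fm[measurable]: "f \<in> borel_measurable borel"
  shows "(\<integral>\<^sup>+z. f z \<partial>lborel) =
    (\<integral>\<^sup>+t. ennreal (indicator {0<..} t * (real DIM('a) * t ^ (DIM('a) - 1))) *
        (\<integral>\<^sup>+y. indicator (ball 0 1) y * f ((t / norm y) *\<^sub>R y) \<partial>lborel) \<partial>lborel)"
proof -
  define n where "n = DIM('a)"
  have n1: "n \<ge> 1" unfolding n_def by (simp add: DIM_positive Suc_leI)
  define dens :: "real \<Rightarrow> ennreal" where "dens t = ennreal (indicator {0<..} t * (real n * t ^ (n - 1)))" for t
  have [measurable]: "dens \<in> borel_measurable borel" unfolding dens_def by measurable
  have [measurable]: "f \<in> borel_measurable lborel" using fm by simp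
  have [measurable]: "ball (0::'a) r \<in> sets borel" for r by simp
  have [measurable]: "Measurable.pred borel (\<lambda>x::'a. l \<in> {norm x<..})" for l by simp
  have [measurable]: "Measurable.pred (borel \<Otimes>\<^sub>M borel) (\<lambda>x::real\<times>'a. fst x \<in> {norm (snd x)<..})"
    unfolding greaterThan_iff by measurable
  have "(\<integral>\<^sup>+t. dens t * (\<integral>\<^sup>+y. indicator (ball 0 1) y * f ((t / norm y) *\<^sub>R y) \<partial>lborel) \<partial>lborel)
     = (\<integral>\<^sup>+t. (\<integral>\<^sup>+y. dens t * (indicator (ball 0 1) y * f ((t / norm y) *\<^sub>R y)) \<partial>lborel) \<partial>lborel)"
    by (intro nn_integral_cong nn_integral_cmult[symmetric]) measurable
  also have "\<dots> = (\<integral>\<^sup>+y. (\<integral>\<^sup>+t. dens t * (indicator (ball 0 1) y * f ((t / norm y) *\<^sub>R y)) \<partial>lborel) \<partial>lborel)"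
    by (rule lborel_pair.Fubini') measurable
  also have "\<dots> = (\<integral>\<^sup>+y. indicator (ball 0 1) y * (\<integral>\<^sup>+t. dens t * f ((t / norm y) *\<^sub>R y) \<partial>lborel) \<partial>lborel)"
    by (intro nn_integral_cong) (auto simp: nn_integral_cmult[symmetric] mult.commute mult.left_commute split: split_indicator)
  also have "\<dots> = (\<integral>\<^sup>+y. indicator (ball 0 1) y * (ennreal (norm y ^ n) * (\<integral>\<^sup>+l. dens l * f (l *\<^sub>R y) \<partial>lborel)) \<partial>lborel)"
  proof -
    have key: "(\<integral>\<^sup>+t. dens t * f ((t / norm y) *\<^sub>R y) \<partial>lborel) = ennreal (norm y ^ n) * (\<integral>\<^sup>+l. dens l * f (l *\<^sub>R y) \<partial>lborel)"
      if y: "y \<noteq> 0" for y :: 'a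
    proof -
    have ny: "norm y > 0" using y by simp
    have "(\<integral>\<^sup>+t. dens t * f ((t / norm y) *\<^sub>R y) \<partial>lborel)
       = ennreal (norm y) * (\<integral>\<^sup>+l. dens (0 + norm y * l) * f (((0 + norm y * l) / norm y) *\<^sub>R y) \<partial>lborel)"
      using ny by (subst nn_integral_real_affine[where c = "norm y" and t = 0]) auto
    also have "\<dots> = ennreal (norm y) * (\<integral>\<^sup>+l. ennreal (norm y ^ (n - 1)) * (dens l * f (l *\<^sub>R y)) \<partial>lborel)"
    proof (rule arg_cong2[where f="(*)"], rule refl, rule nn_integral_cong)
      fix l :: real
      have d: "dens (norm y * l) = ennreal (norm y ^ (n-1)) * dens l"
      proof (cases "l > 0")
        case True then show ?thesis using ny
          by (simp add: dens_def ennreal_mult''[symmetric] power_mult_distrib mult_ac)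
      next
        case False then show ?thesis using ny
          by (simp add: dens_def zero_less_mult_iff)
      qed
      show "dens (0 + norm y * l) * f (((0 + norm y * l) / norm y) *\<^sub>R y) = ennreal (norm y ^ (n - 1)) * (dens l * f (l *\<^sub>R y))"
      proof -
        have e: "((0 + norm y * l) / norm y) = l" using ny by simp
        show ?thesis unfolding e add_0_left d using ny by (simp add: mult.assoc)
      qed
    qed
    also have "\<dots> = ennreal (norm y ^ n) * (\<integral>\<^sup>+l. dens l * f (l *\<^sub>R y) \<partial>lborel)"
    proof -
      have "norm y * norm y ^ (n - 1) = norm y ^ n" using n1 by (cases n) auto
      then show ?thesis
        by (subst nn_integral_cmult) (auto simp: ennreal_mult'[symmetric] mult.assoc[symmetric])
    qed
    finally show ?thesis .
    qed
    show ?thesis using AE_lborel_singleton[of 0]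
      by (intro nn_integral_cong_AE) (auto elim!: eventually_mono simp: key)
  qed
  also have "\<dots> = (\<integral>\<^sup>+y. (\<integral>\<^sup>+l. dens l * (indicator (ball 0 1) y * ennreal (norm y ^ n) * f (l *\<^sub>R y)) \<partial>lborel) \<partial>lborel)"
  proof (rule nn_integral_cong)
    fix y :: 'a
    have "indicator (ball 0 1) y * (ennreal (norm y ^ n) * (\<integral>\<^sup>+l. dens l * f (l *\<^sub>R y) \<partial>lborel))
        = (indicator (ball 0 1) y * ennreal (norm y ^ n)) * (\<integral>\<^sup>+l. dens l * f (l *\<^sub>R y) \<partial>lborel)"
      by (simp add: mult.assoc)
    also have "\<dots> = (\<integral>\<^sup>+l. (indicator (ball 0 1) y * ennreal (norm y ^ n)) * (dens l * f (l *\<^sub>R y)) \<partial>lborel)"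
      by (rule nn_integral_cmult[symmetric]) measurable
    also have "\<dots> = (\<integral>\<^sup>+l. dens l * (indicator (ball 0 1) y * ennreal (norm y ^ n) * f (l *\<^sub>R y)) \<partial>lborel)"
      by (intro nn_integral_cong) (simp add: mult_ac)
    finally show "indicator (ball 0 1) y * (ennreal (norm y ^ n) * (\<integral>\<^sup>+l. dens l * f (l *\<^sub>R y) \<partial>lborel)) = \<dots>" .
  qed
  also have "\<dots> = (\<integral>\<^sup>+l. (\<integral>\<^sup>+y. dens l * (indicator (ball 0 1) y * ennreal (norm y ^ n) * f (l *\<^sub>R y)) \<partial>lborel) \<partial>lborel)"
    by (rule lborel_pair.Fubini') measurable
  also have "\<dots> = (\<integral>\<^sup>+l. dens l * (\<integral>\<^sup>+y. indicator (ball 0 1) y * ennreal (norm y ^ n) * f (l *\<^sub>R y) \<partial>lborel) \<partial>lborel)"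
    by (intro nn_integral_cong nn_integral_cmult) measurable
  also have "\<dots> = (\<integral>\<^sup>+l. (\<integral>\<^sup>+z. ennreal (indicator {0<..} l * (real n / l ^ (n + 1))) * (indicator {norm z<..} l * ennreal (norm z ^ n) * f z) \<partial>lborel) \<partial>lborel)"
  proof (rule nn_integral_cong)
    fix l :: real
    show "dens l * (\<integral>\<^sup>+y. indicator (ball 0 1) y * ennreal (norm y ^ n) * f (l *\<^sub>R y) \<partial>lborel) =
          (\<integral>\<^sup>+z. ennreal (indicator {0<..} l * (real n / l ^ (n + 1))) * (indicator {norm z<..} l * ennreal (norm z ^ n) * f z) \<partial>lborel)"
    proof (cases "l > 0")
      case False then show ?thesis by (simp add: dens_def)
    next
      case True
      define I where "I = (\<integral>\<^sup>+y. indicator (ball 0 1) y * ennreal (norm y ^ n) * f (l *\<^sub>R y) \<partial>lborel)"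
      have "(\<integral>\<^sup>+z. indicator {norm z<..} l * ennreal (norm z ^ n) * f z \<partial>lborel)
          = ennreal (\<bar>l\<bar> ^ n) * (\<integral>\<^sup>+y. indicator {norm (l *\<^sub>R y)<..} l * ennreal (norm (l *\<^sub>R y) ^ n) * f (l *\<^sub>R y) \<partial>lborel)"
        unfolding n_def using True by (intro nn_integral_scale_euclidean) auto
      also have "\<dots> = ennreal (l ^ n) * (\<integral>\<^sup>+y. ennreal (l ^ n) * (indicator (ball 0 1) y * ennreal (norm y ^ n) * f (l *\<^sub>R y)) \<partial>lborel)"
      proof -
        have pt: "indicator {norm (l *\<^sub>R y)<..} l * ennreal (norm (l *\<^sub>R y) ^ n) * f (l *\<^sub>R y)
           = ennreal (l ^ n) * (indicator (ball 0 1) y * ennreal (norm y ^ n) * f (l *\<^sub>R y))" for y :: 'a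
        proof (cases "norm y < 1")
          case True
          then have "l * norm y < l" using \<open>l > 0\<close> by simp
          then show ?thesis using True \<open>l > 0\<close>
            by (simp add: power_mult_distrib ennreal_mult' mult_ac indicator_def)
        next
          case False
          then have "\<not> l * norm y < l" using \<open>l > 0\<close> by (simp add: not_less)
          then show ?thesis using False \<open>l > 0\<close> by (simp add: indicator_def)
        qed
        show ?thesis using True by (simp only: pt abs_of_pos)
      qed
      also have "\<dots> = ennreal (l ^ n * l ^ n) * I"
        unfolding I_def using True by (subst nn_integral_cmult) (measurable, simp add: ennreal_mult' mult.assoc)
      finally have eq: "(\<integral>\<^sup>+z. indicator {norm z<..} l * ennreal (norm z ^ n) * f z \<partial>lborel) = ennreal (l ^ n * l ^ n) * I" .
      have "(\<integral>\<^sup>+z. ennreal (indicator {0<..} l * (real n / l ^ (n + 1))) * (indicator {norm z<..} l * ennreal (norm z ^ n) * f z) \<partial>lborel)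
          = ennreal (real n / l ^ (n + 1)) * (\<integral>\<^sup>+z. indicator {norm z<..} l * ennreal (norm z ^ n) * f z \<partial>lborel)"
      proof -
        have "(\<lambda>z. indicator {norm z<..} l * ennreal (norm z ^ n) * f z) \<in> borel_measurable borel" by measurable
        then have mz: "(\<lambda>z. indicator {norm z<..} l * ennreal (norm z ^ n) * f z) \<in> borel_measurable lborel" by simp
        show ?thesis using True by (simp add: nn_integral_cmult[OF mz, symmetric])
      qed
      also have "\<dots> = ennreal (real n / l ^ (n + 1) * (l ^ n * l ^ n)) * I"
        unfolding eq mult.assoc[symmetric] using True by (subst ennreal_mult[symmetric]) auto
      also have "real n / l ^ (n + 1) * (l ^ n * l ^ n) = real n * l ^ (n - 1)"
      proof -
        have ee: "n + n = (n + 1) + (n - 1)" using n1 by simp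
        have "l ^ n * l ^ n = l ^ (n + 1) * l ^ (n - 1)"
          by (metis ee power_add)
        then show ?thesis using True by simp
      qed
      finally show ?thesis unfolding I_def dens_def using True by simp
    qed
  qed
  also have "\<dots> = (\<integral>\<^sup>+z. (\<integral>\<^sup>+l. ennreal (indicator {0<..} l * (real n / l ^ (n + 1))) * (indicator {norm z<..} l * ennreal (norm z ^ n) * f z) \<partial>lborel) \<partial>lborel)"
    by (rule lborel_pair.Fubini'[symmetric]) measurable
  also have "\<dots> = (\<integral>\<^sup>+z. (ennreal (norm z ^ n) * f z) * (\<integral>\<^sup>+l. ennreal (real n / l ^ (n + 1)) * indicator {norm z<..} l \<partial>lborel) \<partial>lborel)"
  proof (rule nn_integral_cong)
    fix z :: 'a
    show "(\<integral>\<^sup>+l. ennreal (indicator {0<..} l * (real n / l ^ (n + 1))) * (indicator {norm z<..} l * ennreal (norm z ^ n) * f z) \<partial>lborel)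
        = (ennreal (norm z ^ n) * f z) * (\<integral>\<^sup>+l. ennreal (real n / l ^ (n + 1)) * indicator {norm z<..} l \<partial>lborel)"
      apply (subst nn_integral_cmult[symmetric])
       apply measurable
      apply (intro nn_integral_cong)
      apply (auto simp: mult_ac split: split_indicator)
      apply (metis norm_ge_zero le_less_trans)+ done
  qed
  also have "\<dots> = (\<integral>\<^sup>+z. f z \<partial>lborel)"
  proof -
    have "(ennreal (norm z ^ n) * f z) * (\<integral>\<^sup>+l. ennreal (real n / l ^ (n + 1)) * indicator {norm z<..} l \<partial>lborel) = f z"
      if "z \<noteq> 0" for z :: 'a
    proof -
      have "(\<integral>\<^sup>+l. ennreal (real n / l ^ (n + 1)) * indicator {norm z<..} l \<partial>lborel) = ennreal (1 / norm z ^ n)"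
        using that n1 by (intro inner_tail) auto
      then show ?thesis using that by (simp add: mult_ac ennreal_mult'[symmetric])
    qed
    then show ?thesis using AE_lborel_singleton[of 0]
      by (intro nn_integral_cong_AE) (auto elim!: eventually_mono)
  qed
  finally show ?thesis unfolding dens_def n_def by simp
qed


lemma young_q:
  fixes x A q :: real
  assumes q: "0 < q" "q < 2" and A: "A > 0"
  shows "\<bar>x\<bar> powr q * A powr (2 - q) \<le> q / 2 * x\<^sup>2 + (1 - q / 2) * A\<^sup>2"
proof (cases "x = 0")
  case True then show ?thesis using q A by simp
next
  case False
  have "(x\<^sup>2) powr (q/2) * (A\<^sup>2) powr (1 - q/2) \<le> q/2 * x\<^sup>2 + (1 - q/2) * A\<^sup>2"
    using q A False by (intro Youngs_inequality_0) auto
  moreover have "(x\<^sup>2) powr (q/2) = \<bar>x\<bar> powr q"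
  proof -
    have e: "x\<^sup>2 = \<bar>x\<bar> powr 2" using False by (subst powr_numeral) auto
    have "(x\<^sup>2) powr (q/2) = \<bar>x\<bar> powr (2 * (q/2))" by (subst e) (rule powr_powr)
    then show ?thesis by simp
  qed
  moreover have "(A\<^sup>2) powr (1 - q/2) = A powr (2 - q)"
  proof -
    have "A\<^sup>2 = A powr 2" using A by (subst powr_numeral) auto
    then show ?thesis by (simp add: powr_powr right_diff_distrib)
  qed
  ultimately show ?thesis by simp
qed

lemma sph_integrable:
  fixes v :: "'a::euclidean_space \<Rightarrow> real" and g :: "real \<Rightarrow> real"
  assumes v: "continuous_on (ball x0 1) v" and t: "0 \<le> t" "t < 1" and g: "continuous_on UNIV g"
  shows "set_integrable lborel (ball 0 1) (\<lambda>y. g (v (x0 + (t / norm y) *\<^sub>R y)))"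
proof -
  define v' where "v' x = indicator (ball x0 1) x *\<^sub>R v x" for x
  have [measurable]: "v' \<in> borel_measurable borel"
    unfolding v'_def by (rule borel_measurable_continuous_on_indicator) (use v in auto)
  have [measurable]: "g \<in> borel_measurable borel" using g by (rule borel_measurable_continuous_onI)
  have inb: "x0 + (t / norm y) *\<^sub>R y \<in> cball x0 t" for y :: 'a
    using t by (cases "y = 0") (auto simp: dist_norm)
  have sub: "cball x0 t \<subseteq> ball x0 1" using t by auto
  have eq: "g (v (x0 + (t / norm y) *\<^sub>R y)) = g (v' (x0 + (t / norm y) *\<^sub>R y))" for y
    using inb[of y] sub by (auto simp: v'_def)
  have "compact ((g \<circ> v) ` cball x0 t)"
    by (intro compact_continuous_image continuous_on_compose continuous_on_subset[OF v sub]
        continuous_on_subset[OF g]) auto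
  then obtain B where B: "\<And>x. x \<in> cball x0 t \<Longrightarrow> norm (g (v x)) \<le> B"
    using compact_imp_bounded bounded_iff by (metis comp_apply imageI)
  have "integrable lborel (\<lambda>y. indicator (ball 0 1) y *\<^sub>R g (v' (x0 + (t / norm y) *\<^sub>R y)))"
  proof (rule integrableI_bounded_set[where A = "ball 0 1" and B = B])
    show "AE x in lborel. x \<in> ball 0 1 \<longrightarrow> norm (indicator (ball 0 1) x *\<^sub>R g (v' (x0 + (t / norm x) *\<^sub>R x))) \<le> B"
      using B inb eq by (auto simp: eq[symmetric])
    show "(\<lambda>y. indicator (ball 0 1) y *\<^sub>R g (v' (x0 + (t / norm y) *\<^sub>R y))) \<in> borel_measurable lborel"
    proof -
      have "ball (0::'a) 1 \<in> sets borel" by simp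
      then have "(\<lambda>y. indicator (ball 0 1) y *\<^sub>R g (v' (x0 + (t / norm y) *\<^sub>R y))) \<in> borel_measurable borel"
        by measurable
      then show ?thesis by simp
    qed
    show "emeasure lborel (ball (0::'a) 1) < \<infinity>"
      by (rule emeasure_bounded_finite) simp
  qed auto
  then show ?thesis unfolding set_integrable_def by (simp add: eq)
qed



lemma cont_abs_powr: "q > 0 \<Longrightarrow> continuous_on UNIV (\<lambda>z::real. \<bar>z\<bar> powr q)"
  by (intro continuous_on_powr' continuous_intros) auto

lemma sphere_bound:
  fixes v :: "'a::euclidean_space \<Rightarrow> real"
  assumes v: "continuous_on (ball x0 1) v" and t: "0 < t" "t < 1" and q: "1 \<le> q" "q < 2" and Cb: "Cbar > 0"
    and H: "Hfun v x0 t \<le> Cbar * t powr (real DIM('a) - 1 + 2 * \<sigma>)"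
  shows "(LINT y:ball 0 1|lborel. \<bar>v (x0 + (t / norm y) *\<^sub>R y)\<bar> powr q)
     \<le> (q / (2 * DIM('a)) + (1 - q / 2) * measure lborel (ball (0::'a) 1)) * Cbar powr (q / 2) * t powr (\<sigma> * q)"
proof -
  define n where "n = DIM('a)"
  have n1: "n \<ge> 1" unfolding n_def by (simp add: DIM_positive Suc_leI)
  define m1 where "m1 = measure lborel (ball (0::'a) 1)"
  have m1: "m1 \<ge> 0" unfolding m1_def by simp
  have fin: "emeasure lborel (ball (0::'a) 1) < \<infinity>" by (rule emeasure_bounded_finite) simp
  then have fin': "emeasure lborel (ball (0::'a) 1) \<noteq> \<infinity>" by simp
  define A where "A = sqrt Cbar * t powr \<sigma>"
  have A: "A > 0" unfolding A_def using Cb t by simp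
  define X where "X = (LINT y:ball 0 1|lborel. \<bar>v (x0 + (t / norm y) *\<^sub>R y)\<bar> powr q)"
  define Y where "Y = (LINT y:ball 0 1|lborel. (v (x0 + (t / norm y) *\<^sub>R y))\<^sup>2)"
  have iq: "set_integrable lborel (ball 0 1) (\<lambda>y. \<bar>v (x0 + (t / norm y) *\<^sub>R y)\<bar> powr q)"
    using sph_integrable[OF v _ t(2) cont_abs_powr, of q] t q by simp
  have i2: "set_integrable lborel (ball 0 1) (\<lambda>y. (v (x0 + (t / norm y) *\<^sub>R y))\<^sup>2)"
    using sph_integrable[OF v _ t(2), of "\<lambda>z. z\<^sup>2"] t by (simp add: continuous_intros)
  have Hdef: "Hfun v x0 t = real n * t ^ (n - 1) * Y"
    unfolding Hfun_def sphere_integral_def Y_def n_def ..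
  have tp: "t ^ (n - 1) = t powr (real n - 1)"
  proof -
    have "t powr real (n - 1) = t ^ (n - 1)" using t(1) by (rule powr_realpow)
    moreover have "real (n - 1) = real n - 1" using n1 by (simp add: of_nat_diff)
    ultimately show ?thesis by simp
  qed
  have "real n * t powr (real n - 1) * Y \<le> Cbar * (t powr (real n - 1) * t powr (2 * \<sigma>))"
  proof -
    have "real n * t ^ (n - 1) * Y \<le> Cbar * t powr (real n - 1 + 2 * \<sigma>)"
      using H unfolding Hdef n_def .
    then show ?thesis unfolding tp powr_add .
  qed
  then have "real n * Y \<le> Cbar * t powr (2 * \<sigma>)"
    using t by (simp add: mult_ac)
  moreover have A2: "A\<^sup>2 = Cbar * t powr (2 * \<sigma>)"
  proof -
    have "t powr (2 * \<sigma>) = t powr (\<sigma> + \<sigma>)" by (rule arg_cong[where f="\<lambda>e. t powr e"]) simp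
    also have "\<dots> = t powr \<sigma> * t powr \<sigma>" by (rule powr_add)
    also have "\<dots> = (t powr \<sigma>)\<^sup>2" by (rule power2_eq_square[symmetric])
    finally have tt: "(t powr \<sigma>)\<^sup>2 = t powr (2 * \<sigma>)" ..
    have "A\<^sup>2 = (sqrt Cbar)\<^sup>2 * (t powr \<sigma>)\<^sup>2" unfolding A_def by (rule power_mult_distrib)
    then show ?thesis unfolding tt using Cb by simp
  qed
  ultimately have Y: "Y \<le> A\<^sup>2 / real n" using n1 by (simp add: field_simps)
  have "A powr (2 - q) * X = (LINT y:ball 0 1|lborel. A powr (2 - q) * \<bar>v (x0 + (t / norm y) *\<^sub>R y)\<bar> powr q)"
    unfolding X_def by simp
  also have "\<dots> \<le> (LINT y:ball 0 1|lborel. q / 2 * (v (x0 + (t / norm y) *\<^sub>R y))\<^sup>2 + (1 - q / 2) * A\<^sup>2)"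
  proof (rule set_integral_mono)
    show "set_integrable lborel (ball 0 1) (\<lambda>y. A powr (2 - q) * \<bar>v (x0 + (t / norm y) *\<^sub>R y)\<bar> powr q)"
      using iq by simp
    have "set_integrable lborel (ball (0::'a) 1) (\<lambda>y. (1 - q / 2) * A\<^sup>2)"
      unfolding set_integrable_def
      using fin by (intro integrable_indicator) auto
    then show "set_integrable lborel (ball 0 1) (\<lambda>y. q / 2 * (v (x0 + (t / norm y) *\<^sub>R y))\<^sup>2 + (1 - q / 2) * A\<^sup>2)"
      using i2 by (intro set_integral_add) auto
    show "A powr (2 - q) * \<bar>v (x0 + (t / norm y) *\<^sub>R y)\<bar> powr q \<le> q / 2 * (v (x0 + (t / norm y) *\<^sub>R y))\<^sup>2 + (1 - q / 2) * A\<^sup>2" for y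
      using young_q[OF _ q(2) A, of "v (x0 + (t / norm y) *\<^sub>R y)"] q by (simp add: mult_ac)
  qed
  also have "\<dots> = q / 2 * Y + (1 - q / 2) * A\<^sup>2 * m1"
  proof -
    have c: "set_integrable lborel (ball (0::'a) 1) (\<lambda>y. (1 - q / 2) * A\<^sup>2)"
      unfolding set_integrable_def
      using fin by (intro integrable_indicator) auto
    have "(LINT y:ball (0::'a) 1|lborel. (1 - q / 2) * A\<^sup>2) = (1 - q / 2) * A\<^sup>2 * m1"
      unfolding m1_def using fin' by (subst set_integral_const) auto
    then show ?thesis unfolding Y_def using i2 c by (subst set_integral_add(2)) auto
  qed
  also have "\<dots> \<le> q / 2 * (A\<^sup>2 / real n) + (1 - q / 2) * A\<^sup>2 * m1"
    using Y q by (intro add_right_mono mult_left_mono) auto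
  also have "\<dots> = A\<^sup>2 * (q / (2 * real n) + (1 - q / 2) * m1)"
    by (simp add: field_simps)
  finally have le: "A powr (2 - q) * X \<le> A\<^sup>2 * (q / (2 * real n) + (1 - q / 2) * m1)" .
  have "A\<^sup>2 = A powr (2 - q) * A powr q"
    using A by (simp add: powr_add[symmetric] flip: powr_numeral)
  then have "A powr (2 - q) * X \<le> A powr (2 - q) * (A powr q * (q / (2 * real n) + (1 - q / 2) * m1))"
    using le by (simp add: mult_ac)
  then have "X \<le> A powr q * (q / (2 * real n) + (1 - q / 2) * m1)"
    using A by (simp add: mult_le_cancel_left_pos)
  moreover have "A powr q = Cbar powr (q / 2) * t powr (\<sigma> * q)"
  proof -
    have "A powr q = sqrt Cbar powr q * (t powr \<sigma>) powr q"
      unfolding A_def using Cb t by (auto intro: powr_mult)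
    also have "(t powr \<sigma>) powr q = t powr (\<sigma> * q)" by (rule powr_powr)
    also have "sqrt Cbar = Cbar powr (1/2)" using Cb by (simp add: powr_half_sqrt)
    also have "(Cbar powr (1/2)) powr q = Cbar powr (q / 2)" by (simp add: powr_powr)
    finally show ?thesis .
  qed
  ultimately show ?thesis unfolding X_def m1_def n_def by (simp add: mult_ac)
qed



lemma Fpot_bounds:
  assumes "\<mu> > 0" "lp > 0" "lm > 0" "q > 0"
  shows "0 \<le> Fpot \<mu> lp lm q w" "Fpot \<mu> lp lm q w \<le> \<mu> * (lp + lm) * \<bar>w\<bar> powr q"
proof -
  show "0 \<le> Fpot \<mu> lp lm q w" using assms unfolding Fpot_def by simp
  have a: "pos_part w powr q \<le> \<bar>w\<bar> powr q" unfolding pos_part_def using assms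
    by (intro powr_mono2) auto
  have b: "neg_part w powr q \<le> \<bar>w\<bar> powr q" unfolding neg_part_def using assms
    by (intro powr_mono2) auto
  have "\<mu> * lp * pos_part w powr q \<le> \<mu> * lp * \<bar>w\<bar> powr q"
    using a assms by (intro mult_left_mono) auto
  moreover have "\<mu> * lm * neg_part w powr q \<le> \<mu> * lm * \<bar>w\<bar> powr q"
    using b assms by (intro mult_left_mono) auto
  ultimately show "Fpot \<mu> lp lm q w \<le> \<mu> * (lp + lm) * \<bar>w\<bar> powr q"
    unfolding Fpot_def by (simp add: algebra_simps)
qed

lemma Fpot_measurable[measurable]:
  assumes [measurable]: "f \<in> borel_measurable M"
  shows "(\<lambda>x. Fpot \<mu> lp lm q (f x)) \<in> borel_measurable M"
  unfolding Fpot_def pos_part_def neg_part_def by measurable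

lemma ball_integrable:
  fixes v :: "'a::euclidean_space \<Rightarrow> real"
  assumes v: "continuous_on (ball x0 1) v" and s: "0 < s" "s < 1"
    and pos: "\<mu> > 0" "lp > 0" "lm > 0" "q > 0"
  shows "set_integrable lborel (ball x0 s) (\<lambda>x. Fpot \<mu> lp lm q (v x))"
proof -
  define v' where "v' x = indicator (ball x0 1) x *\<^sub>R v x" for x
  have [measurable]: "v' \<in> borel_measurable borel"
    unfolding v'_def by (rule borel_measurable_continuous_on_indicator) (use v in auto)
  have sub: "cball x0 s \<subseteq> ball x0 1" using s by auto
  have "compact (v ` cball x0 s)"
    by (intro compact_continuous_image continuous_on_subset[OF v sub]) auto
  then obtain B where B: "\<And>x. x \<in> cball x0 s \<Longrightarrow> norm (v x) \<le> B"
    using compact_imp_bounded bounded_iff by (metis imageI)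
  have eq: "indicator (ball x0 s) x *\<^sub>R Fpot \<mu> lp lm q (v x) = indicator (ball x0 s) x *\<^sub>R Fpot \<mu> lp lm q (v' x)" for x
    using s by (auto simp: v'_def split: split_indicator)
  have "integrable lborel (\<lambda>x. indicator (ball x0 s) x *\<^sub>R Fpot \<mu> lp lm q (v' x))"
  proof (rule integrableI_bounded_set[where A = "ball x0 s" and B = "\<mu> * (lp + lm) * \<bar>B\<bar> powr q"])
    show "AE x in lborel. x \<in> ball x0 s \<longrightarrow> norm (indicator (ball x0 s) x *\<^sub>R Fpot \<mu> lp lm q (v' x)) \<le> \<mu> * (lp + lm) * \<bar>B\<bar> powr q"
    proof (intro AE_I2 impI)
      fix x assume x: "x \<in> ball x0 s"
      then have "norm (v x) \<le> B" using B by auto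
      then have "\<bar>v x\<bar> powr q \<le> \<bar>B\<bar> powr q" using pos by (intro powr_mono2) auto
      then have "Fpot \<mu> lp lm q (v x) \<le> \<mu> * (lp + lm) * \<bar>B\<bar> powr q"
        using Fpot_bounds[OF pos, of "v x"] pos
        by (meson order_trans mult_left_mono less_imp_le add_pos_pos mult_pos_pos)
      then show "norm (indicator (ball x0 s) x *\<^sub>R Fpot \<mu> lp lm q (v' x)) \<le> \<mu> * (lp + lm) * \<bar>B\<bar> powr q"
        using x eq[of x] Fpot_bounds(1)[OF pos, of "v x"] by simp
    qed
    show "(\<lambda>x. indicator (ball x0 s) x *\<^sub>R Fpot \<mu> lp lm q (v' x)) \<in> borel_measurable lborel"
    proof -
      have "ball x0 s \<in> sets borel" by simp
      then have "(\<lambda>x. indicator (ball x0 s) x *\<^sub>R Fpot \<mu> lp lm q (v' x)) \<in> borel_measurable borel"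
        by measurable
      then show ?thesis by simp
    qed
    show "emeasure lborel (ball x0 s) < \<infinity>" by (rule emeasure_bounded_finite) simp
  qed auto
  then show ?thesis unfolding set_integrable_def eq .
qed



lemma ball_bound:
  fixes v :: "'a::euclidean_space \<Rightarrow> real"
  assumes v: "continuous_on (ball x0 1) v" and s: "0 < s" "s < 1" and q: "1 \<le> q" "q < 2" and Cb: "Cbar > 0"
    and pos: "\<mu> > 0" "lp > 0" "lm > 0" and sig: "\<sigma> \<ge> 0"
    and H: "\<forall>r\<in>{0<..<1}. Hfun v x0 r \<le> Cbar * r powr (real DIM('a) - 1 + 2 * \<sigma>)"
  defines "K \<equiv> q / (2 * DIM('a)) + (1 - q / 2) * measure lborel (ball (0::'a) 1)"
  defines "D \<equiv> \<mu> * (lp + lm) * real DIM('a) * K * Cbar powr (q / 2)"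
  shows "(LINT x:ball x0 s|lborel. Fpot \<mu> lp lm q (v x)) \<le> D * (s powr (real DIM('a) + \<sigma> * q) / (real DIM('a) + \<sigma> * q))"
proof -
  define n where "n = DIM('a)"
  have n1: "n \<ge> 1" unfolding n_def by (simp add: DIM_positive Suc_leI)
  define L where "L = lp + lm"
  have L: "L > 0" unfolding L_def using pos by simp
  have K: "K \<ge> 0" unfolding K_def using q by (intro add_nonneg_nonneg mult_nonneg_nonneg) auto
  have D: "D \<ge> 0" unfolding D_def using pos K by simp
  have q0: "q > 0" using q by simp
  define e where "e = real n - 1 + \<sigma> * q"
  have e: "e > -1" unfolding e_def using n1 sig q by (simp add: add_pos_nonneg)
  define v' where "v' x = indicator (ball x0 1) x *\<^sub>R v x" for x
  have [measurable]: "v' \<in> borel_measurable borel"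
    unfolding v'_def by (rule borel_measurable_continuous_on_indicator) (use v in auto)
  have [measurable]: "ball x0 r \<in> sets borel" for r by simp
  define f :: "'a \<Rightarrow> ennreal" where "f z = ennreal (indicator (ball x0 s) (x0 + z) * (\<mu> * L * \<bar>v' (x0 + z)\<bar> powr q))" for z
  have fm[measurable]: "f \<in> borel_measurable borel" unfolding f_def by measurable
  have ig: "set_integrable lborel (ball x0 s) (\<lambda>x. Fpot \<mu> lp lm q (v x))"
    using ball_integrable[OF v s pos q0] .
  have "ennreal (LINT x:ball x0 s|lborel. Fpot \<mu> lp lm q (v x))
      = (\<integral>\<^sup>+x. ennreal (indicator (ball x0 s) x *\<^sub>R Fpot \<mu> lp lm q (v x)) \<partial>lborel)"
    unfolding set_lebesgue_integral_def
    using ig Fpot_bounds(1)[OF pos q0] unfolding set_integrable_def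
    by (intro nn_integral_eq_integral[symmetric]) auto
  also have "\<dots> \<le> (\<integral>\<^sup>+x. ennreal (indicator (ball x0 s) x * (\<mu> * L * \<bar>v' x\<bar> powr q)) \<partial>lborel)"
  proof (intro nn_integral_mono ennreal_leI)
    fix x :: 'a
    show "indicator (ball x0 s) x *\<^sub>R Fpot \<mu> lp lm q (v x) \<le> indicator (ball x0 s) x * (\<mu> * L * \<bar>v' x\<bar> powr q)"
      using Fpot_bounds(2)[OF pos q0, of "v x"] s unfolding L_def
      by (auto simp: v'_def split: split_indicator)
  qed
  also have "\<dots> = (\<integral>\<^sup>+x. ennreal (indicator (ball x0 s) x * (\<mu> * L * \<bar>v' x\<bar> powr q)) \<partial>distr lborel borel ((+) x0))"
    by (simp add: lborel_distr_plus)
  also have "\<dots> = (\<integral>\<^sup>+z. f z \<partial>lborel)"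
    unfolding f_def by (subst nn_integral_distr) auto
  also have "\<dots> = (\<integral>\<^sup>+t. ennreal (indicator {0<..} t * (real n * t ^ (n - 1))) *
        (\<integral>\<^sup>+y. indicator (ball 0 1) y * f ((t / norm y) *\<^sub>R y) \<partial>lborel) \<partial>lborel)"
    unfolding n_def by (rule polar[OF fm])
  also have "\<dots> \<le> (\<integral>\<^sup>+t. ennreal (indicator {0..s} t * (D * t powr e)) \<partial>lborel)"
  proof (intro nn_integral_mono)
    fix t :: real
    show "ennreal (indicator {0<..} t * (real n * t ^ (n - 1))) *
        (\<integral>\<^sup>+y. indicator (ball 0 1) y * f ((t / norm y) *\<^sub>R y) \<partial>lborel) \<le> ennreal (indicator {0..s} t * (D * t powr e))"
    proof (cases "t > 0")
      case False then show ?thesis by simp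
    next
      case tpos: True
      show ?thesis
      proof (cases "t < s")
        case False
        have AE0: "AE y in lborel. indicator (ball 0 1) y * f ((t / norm y) *\<^sub>R y) = 0"
          using AE_lborel_singleton[of 0]
        proof (rule eventually_mono)
          fix y :: 'a assume y: "y \<noteq> 0"
          have "dist x0 (x0 + (t / norm y) *\<^sub>R y) = t" using y tpos by (simp add: dist_norm)
          then show "indicator (ball 0 1) y * f ((t / norm y) *\<^sub>R y) = 0"
            using False by (simp add: f_def)
        qed
        have "(\<integral>\<^sup>+y. indicator (ball 0 1) y * f ((t / norm y) *\<^sub>R y) \<partial>lborel) = 0"
          using nn_integral_cong_AE[OF AE0] by simp
        then show ?thesis by simp
      next
        case True
        have sub: "x0 + (t / norm y) *\<^sub>R y \<in> ball x0 s" for y :: 'a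
          using True tpos by (cases "y = 0") (auto simp: dist_norm)
        have sub1: "ball x0 s \<subseteq> ball x0 1" using s by auto
        have iq: "set_integrable lborel (ball 0 1) (\<lambda>y. \<bar>v (x0 + (t / norm y) *\<^sub>R y)\<bar> powr q)"
          using sph_integrable[OF v _ _ cont_abs_powr[OF q0]] tpos True s by simp
        have "(\<integral>\<^sup>+y. indicator (ball 0 1) y * f ((t / norm y) *\<^sub>R y) \<partial>lborel)
            = (\<integral>\<^sup>+y. ennreal (indicator (ball 0 1) y *\<^sub>R (\<mu> * L * \<bar>v (x0 + (t / norm y) *\<^sub>R y)\<bar> powr q)) \<partial>lborel)"
        proof (rule nn_integral_cong)
          fix y :: 'a
          show "indicator (ball 0 1) y * f ((t / norm y) *\<^sub>R y) = ennreal (indicator (ball 0 1) y *\<^sub>R (\<mu> * L * \<bar>v (x0 + (t / norm y) *\<^sub>R y)\<bar> powr q))"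
            using sub[of y] sub1 by (auto simp: f_def v'_def split: split_indicator)
        qed
        also have "\<dots> = ennreal (LINT y:ball 0 1|lborel. \<mu> * L * \<bar>v (x0 + (t / norm y) *\<^sub>R y)\<bar> powr q)"
        proof -
          have iq2: "set_integrable lborel (ball 0 1) (\<lambda>y. \<mu> * L * \<bar>v (x0 + (t / norm y) *\<^sub>R y)\<bar> powr q)"
            using iq by (rule set_integrable_mult_right)
          show ?thesis
            unfolding set_lebesgue_integral_def
            using iq2 pos L unfolding set_integrable_def
            by (intro nn_integral_eq_integral) auto
        qed
        also have "\<dots> = ennreal (\<mu> * L * (LINT y:ball 0 1|lborel. \<bar>v (x0 + (t / norm y) *\<^sub>R y)\<bar> powr q))"
          by simp
        also have "\<dots> \<le> ennreal (\<mu> * L * (K * Cbar powr (q / 2) * t powr (\<sigma> * q)))"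
        proof (intro ennreal_leI mult_left_mono)
          show "(LINT y:ball 0 1|lborel. \<bar>v (x0 + (t / norm y) *\<^sub>R y)\<bar> powr q) \<le> K * Cbar powr (q / 2) * t powr (\<sigma> * q)"
            unfolding K_def using H True s tpos
            by (intro sphere_bound[OF v tpos _ q Cb]) auto
        qed (use pos L in auto)
        finally have inner: "(\<integral>\<^sup>+y. indicator (ball 0 1) y * f ((t / norm y) *\<^sub>R y) \<partial>lborel) \<le> ennreal (\<mu> * L * (K * Cbar powr (q / 2) * t powr (\<sigma> * q)))" .
        have "ennreal (indicator {0<..} t * (real n * t ^ (n - 1))) *
            (\<integral>\<^sup>+y. indicator (ball 0 1) y * f ((t / norm y) *\<^sub>R y) \<partial>lborel)
          \<le> ennreal (real n * t ^ (n - 1)) * ennreal (\<mu> * L * (K * Cbar powr (q / 2) * t powr (\<sigma> * q)))"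
          using tpos inner by (auto intro!: mult_left_mono)
        also have "\<dots> = ennreal (real n * t ^ (n - 1) * (\<mu> * L * (K * Cbar powr (q / 2) * t powr (\<sigma> * q))))"
          using tpos by (intro ennreal_mult'[symmetric]) simp
        also have "real n * t ^ (n - 1) * (\<mu> * L * (K * Cbar powr (q / 2) * t powr (\<sigma> * q))) = D * t powr e"
        proof -
          have "t powr real (n - 1) = t ^ (n - 1)" using tpos by (rule powr_realpow)
          moreover have "real (n - 1) = real n - 1" using n1 by (simp add: of_nat_diff)
          ultimately have tp: "t ^ (n - 1) = t powr (real n - 1)" by simp
          have "t powr e = t powr (real n - 1) * t powr (\<sigma> * q)" unfolding e_def by (rule powr_add)
          then show ?thesis unfolding tp unfolding D_def L_def n_def by (simp add: mult_ac)
        qed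
        finally show ?thesis using tpos True by simp
      qed
    qed
  qed
  also have "\<dots> = ennreal (D * (s powr (e + 1) / (e + 1)))"
  proof -
    have "((\<lambda>t. D * t powr e) has_integral D * (s powr (e + 1) / (e + 1))) {0..s}"
      using e s by (intro has_integral_mult_right has_integral_powr_from_0) auto
    then show ?thesis
      using D by (intro nn_integral_has_integral_lebesgue) auto
  qed
  finally have "ennreal (LINT x:ball x0 s|lborel. Fpot \<mu> lp lm q (v x)) \<le> ennreal (D * (s powr (e + 1) / (e + 1)))" .
  moreover have "e + 1 = real DIM('a) + \<sigma> * q" unfolding e_def n_def by simp
  ultimately show ?thesis using D e s by (subst (asm) ennreal_le_iff) auto
qed



lemma powr_int_nn:
  fixes M ee r :: real
  assumes "ee > -1" "M \<ge> 0" "r \<ge> 0"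
  shows "(\<integral>\<^sup>+s. ennreal (indicator {0..r} s * (M * s powr ee)) \<partial>lborel) = ennreal (M * (r powr (ee + 1) / (ee + 1)))"
proof -
  have "((\<lambda>t. M * t powr ee) has_integral M * (r powr (ee + 1) / (ee + 1))) {0..r}"
    using assms by (intro has_integral_mult_right has_integral_powr_from_0) auto
  then show ?thesis using assms by (intro nn_integral_has_integral_lebesgue) auto
qed

lemma powr_bound_integral:
  fixes P :: "real \<Rightarrow> real"
  assumes meas: "set_borel_measurable lborel {0<..<1} P"
    and b: "\<And>s. 0 < s \<Longrightarrow> s < 1 \<Longrightarrow> 0 \<le> P s \<and> P s \<le> M * s powr ee" and ee: "ee > -1" and M: "M \<ge> 0"
  shows "set_integrable lborel {0<..<1} P"
    and "\<And>r. 0 < r \<Longrightarrow> r < 1 \<Longrightarrow> (LINT s:{0<..r}|lborel. P s) \<le> M * (r powr (ee + 1) / (ee + 1))"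
proof -
  have m[measurable]: "(\<lambda>s. indicator {0<..<1} s *\<^sub>R P s) \<in> borel_measurable lborel"
    using meas unfolding set_borel_measurable_def .
  have "(\<integral>\<^sup>+s. ennreal (indicator {0<..<1} s *\<^sub>R P s) \<partial>lborel) \<le> (\<integral>\<^sup>+s. ennreal (indicator {0..1} s * (M * s powr ee)) \<partial>lborel)"
  proof (intro nn_integral_mono ennreal_leI)
    fix s :: real
    have "0 \<le> M * s powr ee" using M by simp
    then show "indicator {0<..<1} s *\<^sub>R P s \<le> indicator {0..1} s * (M * s powr ee)"
      using b[of s] by (cases "0 < s \<and> s < 1") (auto simp: indicator_def)
  qed
  also have "\<dots> = ennreal (M * (1 powr (ee + 1) / (ee + 1)))"
    using ee M by (intro powr_int_nn) auto
  finally have fin0: "(\<integral>\<^sup>+s. ennreal (indicator {0<..<1} s *\<^sub>R P s) \<partial>lborel) \<le> ennreal (M * (1 powr (ee + 1) / (ee + 1)))" .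
  have fin: "(\<integral>\<^sup>+s. ennreal (indicator {0<..<1} s *\<^sub>R P s) \<partial>lborel) < \<infinity>"
    using le_less_trans[OF fin0 ennreal_less_top] by (simp add: infinity_ennreal_def)
  show si: "set_integrable lborel {0<..<1} P"
    unfolding set_integrable_def
    using fin b by (intro integrableI_nonneg m) (auto split: split_indicator)
  fix r :: real assume r: "0 < r" "r < 1"
  have sr: "set_integrable lborel {0<..r} P"
    by (rule set_integrable_subset[OF si]) (use r in auto)
  have "ennreal (LINT s:{0<..r}|lborel. P s) = (\<integral>\<^sup>+s. ennreal (indicator {0<..r} s *\<^sub>R P s) \<partial>lborel)"
    unfolding set_lebesgue_integral_def
    using sr b r unfolding set_integrable_def
    by (intro nn_integral_eq_integral[symmetric]) (auto split: split_indicator)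
  also have "\<dots> \<le> (\<integral>\<^sup>+s. ennreal (indicator {0..r} s * (M * s powr ee)) \<partial>lborel)"
  proof (intro nn_integral_mono ennreal_leI)
    fix s :: real
    have "0 \<le> M * s powr ee" using M by simp
    then show "indicator {0<..r} s *\<^sub>R P s \<le> indicator {0..r} s * (M * s powr ee)"
      using b[of s] r by (cases "0 < s \<and> s \<le> r") (auto simp: indicator_def)
  qed
  also have "\<dots> = ennreal (M * (r powr (ee + 1) / (ee + 1)))"
    using ee M r by (intro powr_int_nn) auto
  finally show "(LINT s:{0<..r}|lborel. P s) \<le> M * (r powr (ee + 1) / (ee + 1))"
    using ee M r by (subst (asm) ennreal_le_iff) auto
qed



lemma Phi_measurable:
  fixes v :: "'a::euclidean_space \<Rightarrow> real"
  assumes v: "continuous_on (ball x0 1) v"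
  shows "set_borel_measurable lborel {0<..<1} (Phi \<mu> lp lm q \<gamma> v x0)"
proof -
  define v' where "v' x = indicator (ball x0 1) x *\<^sub>R v x" for x
  have [measurable]: "v' \<in> borel_measurable borel"
    unfolding v'_def by (rule borel_measurable_continuous_on_indicator) (use v in auto)
  have [measurable]: "Measurable.pred (borel \<Otimes>\<^sub>M borel) (\<lambda>p::real \<times> 'a. snd p \<in> ball x0 (fst p))"
    unfolding mem_ball by measurable
  define \<Psi> where "\<Psi> s = (2 * real DIM('a) - (real DIM('a) - 2) * q) / (q * s powr (real DIM('a) - 1 + 2 * \<gamma>)) *
       (\<integral>x. indicator (ball x0 s) x *\<^sub>R Fpot \<mu> lp lm q (v' x) \<partial>lborel)" for s
  have "(\<lambda>(s, x). indicator (ball x0 s) x *\<^sub>R Fpot \<mu> lp lm q (v' x)) \<in> borel_measurable (lborel \<Otimes>\<^sub>M lborel)"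
    by measurable
  then have "(\<lambda>s. \<integral>x. indicator (ball x0 s) x *\<^sub>R Fpot \<mu> lp lm q (v' x) \<partial>lborel) \<in> borel_measurable lborel"
    by (rule lborel.borel_measurable_lebesgue_integral)
  then have m: "(\<lambda>s. indicator {0<..<1} s *\<^sub>R \<Psi> s) \<in> borel_measurable lborel"
    unfolding \<Psi>_def by measurable
  have eqs: "indicator {0<..<1} s *\<^sub>R Phi \<mu> lp lm q \<gamma> v x0 s = indicator {0<..<1} s *\<^sub>R \<Psi> s" for s
  proof (cases "0 < s \<and> s < 1")
    case True
    have "(LINT x:ball x0 s|lborel. Fpot \<mu> lp lm q (v x)) = (\<integral>x. indicator (ball x0 s) x *\<^sub>R Fpot \<mu> lp lm q (v' x) \<partial>lborel)"
      unfolding set_lebesgue_integral_def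
      using True by (intro Bochner_Integration.integral_cong) (auto simp: v'_def split: split_indicator)
    then show ?thesis unfolding Phi_def \<Psi>_def by simp
  qed simp
  show ?thesis unfolding set_borel_measurable_def eqs by (rule m)
qed



theorem lemma5p2:
  fixes q lp lm :: real
  assumes dim: "DIM('a::euclidean_space) \<ge> 2"
    and q: "1 \<le> q" "q < 2"
    and lam: "lp > 0" "lm > 0"
  shows "\<exists>C>0. \<forall>\<mu>>0. \<forall>(x0::'a) v. \<forall>\<sigma> Cbar.
     weak_solution (ball x0 1) (rhs \<mu> lp lm q) v \<and> continuous_on (ball x0 1) v \<and>
     1 \<le> \<sigma> \<and> \<sigma> < 2 / (2 - q) \<and> Cbar > 0 \<and>
     (\<forall>r\<in>{0<..<1}. Hfun v x0 r \<le> Cbar * r powr (real DIM('a) - 1 + 2 * \<sigma>))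
     \<longrightarrow>
     (\<forall>\<gamma>. \<sigma> \<le> \<gamma> \<and> \<gamma> < (2 + \<sigma> * q) / 2 \<longrightarrow>
        set_integrable lborel {0<..<1} (Phi \<mu> lp lm q \<gamma> v x0) \<and>
        (\<forall>r\<in>{0<..<1}.
           (LINT s:{0<..r}|lborel. Phi \<mu> lp lm q \<gamma> v x0 s)
             \<le> C * \<mu> * Cbar powr (q / 2) / (2 + \<sigma> * q - 2 * \<gamma>) * r powr (2 + \<sigma> * q - 2 * \<gamma>)))"
proof -
  define K where "K = q / (2 * DIM('a)) + (1 - q / 2) * measure lborel (ball (0::'a) 1)"
  define c1 where "c1 = (2 * real DIM('a) - (real DIM('a) - 2) * q) / q"
  define C where "C = c1 * (lp + lm) * K"
  have n2: "real DIM('a) \<ge> 2" using dim by simp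
  have K: "K > 0" unfolding K_def using q
    by (intro add_pos_nonneg mult_nonneg_nonneg) auto
  have "(real DIM('a) - 2) * q \<le> (real DIM('a) - 2) * 2"
    using n2 q by (intro mult_left_mono) auto
  then have c1: "c1 > 0" unfolding c1_def using q by (intro divide_pos_pos) auto
  have C: "C > 0" unfolding C_def using c1 K lam by simp
  show ?thesis
  proof (rule exI[of _ C], rule conjI[OF C], intro allI impI)
    fix \<mu> :: real and x0 :: 'a and v :: "'a \<Rightarrow> real" and \<sigma> Cbar \<gamma> :: real
    assume mu: "\<mu> > 0"
    assume hyp: "weak_solution (ball x0 1) (rhs \<mu> lp lm q) v \<and> continuous_on (ball x0 1) v \<and>
     1 \<le> \<sigma> \<and> \<sigma> < 2 / (2 - q) \<and> Cbar > 0 \<and>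
     (\<forall>r\<in>{0<..<1}. Hfun v x0 r \<le> Cbar * r powr (real DIM('a) - 1 + 2 * \<sigma>))"
    then have v: "continuous_on (ball x0 1) v" and sig: "1 \<le> \<sigma>" and Cb: "Cbar > 0"
      and H: "\<forall>r\<in>{0<..<1}. Hfun v x0 r \<le> Cbar * r powr (real DIM('a) - 1 + 2 * \<sigma>)"
      by auto
    assume g: "\<sigma> \<le> \<gamma> \<and> \<gamma> < (2 + \<sigma> * q) / 2"
    define ee where "ee = 1 + \<sigma> * q - 2 * \<gamma>"
    have ee: "ee > -1" unfolding ee_def using g by simp
    define M where "M = C * \<mu> * Cbar powr (q / 2)"
    have M: "M \<ge> 0" unfolding M_def using C mu by simp
    define a where "a = real DIM('a) - 1 + 2 * \<gamma>"
    define b where "b = real DIM('a) + \<sigma> * q"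
    have b: "b > 0" unfolding b_def using n2 sig q by (simp add: add_pos_nonneg)
    define D where "D = \<mu> * (lp + lm) * real DIM('a) * K * Cbar powr (q / 2)"
    have bnd: "0 \<le> Phi \<mu> lp lm q \<gamma> v x0 s \<and> Phi \<mu> lp lm q \<gamma> v x0 s \<le> M * s powr ee"
      if s: "0 < s" "s < 1" for s
    proof -
      define A where "A = (LINT x:ball x0 s|lborel. Fpot \<mu> lp lm q (v x))"
      have A0: "A \<ge> 0" unfolding A_def set_lebesgue_integral_def
      proof (intro integral_nonneg_AE AE_I2)
        fix x :: 'a
        have "0 \<le> Fpot \<mu> lp lm q (v x)" using Fpot_bounds(1)[OF mu lam, of q] q by simp
        then show "0 \<le> indicator (ball x0 s) x *\<^sub>R Fpot \<mu> lp lm q (v x)"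
          by (simp split: split_indicator)
      qed
      have A1: "A \<le> D * (s powr b / b)"
        unfolding A_def D_def K_def b_def
        using ball_bound[OF v s q Cb mu lam, of \<sigma>] sig H by simp
      have pa: "s powr a > 0" using s by simp
      have Phi_eq: "Phi \<mu> lp lm q \<gamma> v x0 s = c1 / s powr a * A"
        unfolding Phi_def c1_def A_def a_def divide_divide_eq_left ..
      have c1a: "c1 / s powr a \<ge> 0" using c1 pa by simp
      have "Phi \<mu> lp lm q \<gamma> v x0 s \<le> c1 / s powr a * (D * (s powr b / b))"
        unfolding Phi_eq using A1 c1a by (rule mult_left_mono)
      also have "\<dots> = c1 * D / b * (s powr b / s powr a)"
        using pa b by (simp add: field_simps)
      also have "s powr b / s powr a = s powr ee"
        unfolding powr_diff[symmetric] a_def b_def ee_def by (simp add: algebra_simps)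
      also have "c1 * D / b = M * (real DIM('a) / b)"
        unfolding M_def C_def D_def using b by (simp add: field_simps)
      also have "M * (real DIM('a) / b) * s powr ee \<le> M * s powr ee"
      proof (intro mult_right_mono)
        have "real DIM('a) / b \<le> 1" using b sig q unfolding b_def by (simp add: divide_le_eq_1)
        then show "M * (real DIM('a) / b) \<le> M" using mult_left_mono[of "real DIM('a) / b" 1 M] M by linarith
      qed simp
      finally have up: "Phi \<mu> lp lm q \<gamma> v x0 s \<le> M * s powr ee" .
      have "0 \<le> Phi \<mu> lp lm q \<gamma> v x0 s" unfolding Phi_eq using c1a A0 by (rule mult_nonneg_nonneg)
      then show ?thesis using up by simp
    qed
    have meas: "set_borel_measurable lborel {0<..<1} (Phi \<mu> lp lm q \<gamma> v x0)"
      by (rule Phi_measurable[OF v])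
    note PB = powr_bound_integral[OF meas bnd ee M]
    have fin: "C * \<mu> * Cbar powr (q / 2) / (2 + \<sigma> * q - 2 * \<gamma>) * r powr (2 + \<sigma> * q - 2 * \<gamma>)
        = M * (r powr (ee + 1) / (ee + 1))" for r
      unfolding M_def ee_def by (simp add: algebra_simps)
    show "set_integrable lborel {0<..<1} (Phi \<mu> lp lm q \<gamma> v x0) \<and>
        (\<forall>r\<in>{0<..<1}.
           (LINT s:{0<..r}|lborel. Phi \<mu> lp lm q \<gamma> v x0 s)
             \<le> C * \<mu> * Cbar powr (q / 2) / (2 + \<sigma> * q - 2 * \<gamma>) * r powr (2 + \<sigma> * q - 2 * \<gamma>))"
    proof (intro conjI ballI)
      show "set_integrable lborel {0<..<1} (Phi \<mu> lp lm q \<gamma> v x0)" by (rule PB(1))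
      fix r :: real assume r: "r \<in> {0<..<1}"
      show "(LINT s:{0<..r}|lborel. Phi \<mu> lp lm q \<gamma> v x0 s)
             \<le> C * \<mu> * Cbar powr (q / 2) / (2 + \<sigma> * q - 2 * \<gamma>) * r powr (2 + \<sigma> * q - 2 * \<gamma>)"
        unfolding fin using r by (intro PB(2)) auto
    qed
  qed
qed

end
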